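(* Let $T>0$, $d\ge 1$, $\gamma\in(0,\infty)$, let $f,h,g:[0,T]\to\mathbb{R}$ be continuous functions, and let $\mathbf{m},x_0,x_T\in\mathbb{R}^d$ be fixed vectors. Consider the deterministic optimal control problem $$\min_{\mathbf{u}_{\cdot,\gamma}}\ \int_0^T \tfrac12\|\mathbf{u}_{t,\gamma}\|_2^2\,dt+\tfrac{\gamma}{2}\|\mathbf{x}_T^u-x_T\|_2^2$$ over controls $\mathbf{u}_{\cdot,\gamma}:[0,T]\to\mathbb{R}^d$, subject to the dynamics $$\frac{d\mathbf{x}_t}{dt}=f_t\mathbf{x}_t+h_t\mathbf{m}+g_t\mathbf{u}_{t,\gamma},\qquad \mathbf{x}_0^u=x_0,$$ where $\mathbf{x}^u_t$ denotes the resulting state trajectory. Define $\bar f_{s:t}=\int_s^t f_z\,dz$, $\bar f_t=\bar f_{0:t}$, $\bar h_{s:t}=\int_s^t e^{-\bar f_z}h_z\,dz$, $\bar h_t=\bar h_{0:t}$, $\bar g^2_{s:t}=\int_s^t e^{-2\bar f_z}g_z^2\,dz$, $\bar g^2_t=\bar g^2_{0:t}$, and $d_{t,\gamma}=\gamma^{-1}+e^{2\bar f_T}\bar g^2_{t:T}$. Then the optimal controller, written in terms of the current state $\mathbf{x}_t$ of the optimal trajectory, is $$\mathbf{u}^*_{t,\gamma}=g_t e^{\bar f_{t:T}}\,\frac{x_T-e^{\bar f_{t:T}}\mathbf{x}_t-\mathbf{m}\,e^{\bar f_T}\bar h_{t:T}}{d_{t,\gamma}},$$ and the optimal trajectory is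 given, for all $t\in[0,T]$, by $$\mathbf{x}_t=e^{\bar f_t}\left(\frac{d_{t,\gamma}}{d_{0,\gamma}}x_0+\frac{e^{\bar f_T}\bar g^2_t}{d_{0,\gamma}}x_T+\Big(\bar h_t-\frac{e^{2\bar f_T}\bar h_T\bar g^2_t}{d_{0,\gamma}}\Big)\mathbf{m}\right).$$
   Context: All norms are Euclidean. The quantity $\gamma$ is the terminal penalty coefficient; $x_0$ is the prescribed initial state and $x_T$ the prescribed target terminal point. *)

theory Defs
  imports "HOL-Analysis.Analysis"
begin

definition fbar :: "(real \<Rightarrow> real) \<Rightarrow> real \<Rightarrow> real \<Rightarrow> real" where
  "fbar f s t = integral {s..t} f"

definition hbar :: "(real \<Rightarrow> real) \<Rightarrow> (real \<Rightarrow> real) \<Rightarrow> real \<Rightarrow> real \<Rightarrow> real" where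
  "hbar f h s t = integral {s..t} (\<lambda>z. exp (- fbar f 0 z) * h z)"

definition gbar2 :: "(real \<Rightarrow> real) \<Rightarrow> (real \<Rightarrow> real) \<Rightarrow> real \<Rightarrow> real \<Rightarrow> real" where
  "gbar2 f g s t = integral {s..t} (\<lambda>z. exp (- 2 * fbar f 0 z) * (g z)\<^sup>2)"

definition dgam :: "(real \<Rightarrow> real) \<Rightarrow> (real \<Rightarrow> real) \<Rightarrow> real \<Rightarrow> real \<Rightarrow> real \<Rightarrow> real" where
  "dgam f g T \<gamma> t = inverse \<gamma> + exp (2 * fbar f 0 T) * gbar2 f g t T"

text \<open>Admissible control/trajectory pairs: u square-integrable on [0,T], and x the
 (Caratheodory) solution of dx/dt = f x + h m + g u with x 0 = x0, written in integral form.\<close>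

definition admissible ::
  "(real \<Rightarrow> real) \<Rightarrow> (real \<Rightarrow> real) \<Rightarrow> (real \<Rightarrow> real) \<Rightarrow> 'a::euclidean_space \<Rightarrow> 'a \<Rightarrow> real
   \<Rightarrow> (real \<Rightarrow> 'a) \<Rightarrow> (real \<Rightarrow> 'a) \<Rightarrow> bool" where
  "admissible f h g m x0 T u x \<longleftrightarrow>
     u integrable_on {0..T} \<and> (\<lambda>t. (norm (u t))\<^sup>2) integrable_on {0..T} \<and>
     continuous_on {0..T} x \<and> x 0 = x0 \<and>
     (\<forall>t\<in>{0..T}. (\<lambda>s. f s *\<^sub>R x s + h s *\<^sub>R m + g s *\<^sub>R u s) integrable_on {0..t} \<and>
        x t = x0 + integral {0..t} (\<lambda>s. f s *\<^sub>R x s + h s *\<^sub>R m + g s *\<^sub>R u s))"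

definition cost :: "real \<Rightarrow> 'a::euclidean_space \<Rightarrow> real \<Rightarrow> (real \<Rightarrow> 'a) \<Rightarrow> (real \<Rightarrow> 'a) \<Rightarrow> real" where
  "cost \<gamma> xT T u x = integral {0..T} (\<lambda>t. (norm (u t))\<^sup>2 / 2) + \<gamma> / 2 * (norm (x T - xT))\<^sup>2"

end

theory Submission
  imports Defs
begin


lemma sigma_finite_lebesgue: "sigma_finite_measure (lebesgue :: real measure)"
proof -
  obtain A :: "real set set" where A: "countable A" "A \<subseteq> sets lborel" "\<Union>A = space lborel"
     "\<forall>a\<in>A. emeasure lborel a \<noteq> \<infinity>"
    using lborel.sigma_finite_countable by blast
  have "countable A \<and> A \<subseteq> sets lebesgue \<and> \<Union>A = space lebesgue \<and> (\<forall>a\<in>A. emeasure lebesgue a \<noteq> \<infinity>)"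
  proof (intro conjI)
    show "countable A" by (rule A(1))
    show "A \<subseteq> sets lebesgue" using A(2) sets_completionI_sets by blast
    show "\<Union>A = space lebesgue" using A(3) by (simp only: space_completion)
    show "\<forall>a\<in>A. emeasure lebesgue a \<noteq> \<infinity>"
    proof
      fix a assume "a \<in> A"
      then have a: "a \<in> sets lborel" using A(2) by blast
      have "emeasure lebesgue a = emeasure lborel (main_part lborel a)"
        by (rule emeasure_completion[OF sets_completionI_sets[OF a]])
      also have "main_part lborel a = a" by (rule main_part[OF a])
      finally show "emeasure lebesgue a \<noteq> \<infinity>" using A(4) \<open>a \<in> A\<close> by metis
    qed
  qed
  then show ?thesis by (rule sigma_finite_measure.intro[OF exI[of _ A]])
qed

interpretation leb_pair: pair_sigma_finite "lebesgue :: real measure" "lebesgue :: real measure"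
  by (intro pair_sigma_finite.intro sigma_finite_lebesgue)

lemma id_leb_borel: "id \<in> borel_measurable (lebesgue :: real measure)"
  by (simp add: measurable_completion)

lemma fst_leb[measurable]: "fst \<in> borel_measurable ((lebesgue :: real measure) \<Otimes>\<^sub>M (lebesgue :: real measure))"
proof -
  have "fst \<in> ((lebesgue :: real measure) \<Otimes>\<^sub>M (lebesgue :: real measure)) \<rightarrow>\<^sub>M (lebesgue :: real measure)" by (rule measurable_fst)
  from measurable_comp[OF this id_leb_borel] show ?thesis by simp
qed

lemma snd_leb[measurable]: "snd \<in> borel_measurable ((lebesgue :: real measure) \<Otimes>\<^sub>M (lebesgue :: real measure))"
proof -
  have "snd \<in> ((lebesgue :: real measure) \<Otimes>\<^sub>M (lebesgue :: real measure)) \<rightarrow>\<^sub>M (lebesgue :: real measure)" by (rule measurable_snd)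
  from measurable_comp[OF this id_leb_borel] show ?thesis by simp
qed

lemma meas_test:
  fixes v :: "real \<Rightarrow> 'a::euclidean_space" and \<psi> :: "real \<Rightarrow> real"
  assumes v: "v \<in> borel_measurable lebesgue"
    and \<psi>: "\<psi> \<in> borel_measurable borel"
  shows "(\<lambda>p. indicator {(s,t). a \<le> s \<and> s \<le> t \<and> t \<le> b} p *\<^sub>R (\<psi> (snd p) *\<^sub>R v (fst p)))
     \<in> borel_measurable ((lebesgue :: real measure) \<Otimes>\<^sub>M (lebesgue :: real measure))"
proof -
  have 1: "(\<lambda>p. \<psi> (snd p)) \<in> borel_measurable ((lebesgue :: real measure) \<Otimes>\<^sub>M (lebesgue :: real measure))"
    using measurable_comp[OF snd_leb \<psi>] by (simp add: o_def)
  have 2: "(\<lambda>p. v (fst p)) \<in> borel_measurable ((lebesgue :: real measure) \<Otimes>\<^sub>M (lebesgue :: real measure))"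
    using measurable_comp[OF measurable_fst v] by (simp add: o_def)
  have S: "{(s,t). a \<le> s \<and> s \<le> t \<and> t \<le> b} = {p \<in> space ((lebesgue :: real measure) \<Otimes>\<^sub>M (lebesgue :: real measure)). a \<le> fst p \<and> fst p \<le> snd p \<and> snd p \<le> b}"
    by (auto simp: space_pair_measure)
  have 3: "{(s,t). a \<le> s \<and> s \<le> t \<and> t \<le> b} \<in> sets ((lebesgue :: real measure) \<Otimes>\<^sub>M (lebesgue :: real measure))"
    unfolding S by measurable
  show ?thesis
    by (intro borel_measurable_scaleR borel_measurable_indicator 3 1 2)
qed

lemma abs_int_cont_scaleR:
  fixes c :: "real \<Rightarrow> real" and v :: "real \<Rightarrow> 'a::euclidean_space"
  assumes "continuous_on {a..b} c" "v absolutely_integrable_on {a..b}"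
  shows "(\<lambda>s. c s *\<^sub>R v s) absolutely_integrable_on {a..b}"
proof (rule absolutely_integrable_bounded_measurable_product[where h="(*\<^sub>R)"])
  show "bilinear ((*\<^sub>R) :: real \<Rightarrow> 'a \<Rightarrow> 'a)"
    by (simp add: bilinear_def bounded_linear_scaleR_right bounded_linear_scaleR_left bounded_linear.linear)
  show "c \<in> borel_measurable (lebesgue_on {a..b})"
    by (rule continuous_imp_measurable_on_sets_lebesgue) (use assms in auto)
  show "bounded (c ` {a..b})"
    by (intro compact_imp_bounded compact_continuous_image assms) auto
next
  show "{a..b} \<in> sets lebesgue" by simp
  show "v absolutely_integrable_on {a..b}" by (rule assms(2))
qed

lemma swap_lemma:
  fixes v :: "real \<Rightarrow> 'a::euclidean_space" and \<psi> :: "real \<Rightarrow> real"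
  assumes v: "v absolutely_integrable_on {a..b}" and \<psi>: "continuous_on {a..b} \<psi>"
  shows "integral {a..b} (\<lambda>s. integral {s..b} \<psi> *\<^sub>R v s) = integral {a..b} (\<lambda>t. \<psi> t *\<^sub>R integral {a..t} v)"
proof -
  define S where "S = {(s,t). a \<le> s \<and> s \<le> t \<and> t \<le> (b::real)}"
  define \<psi>' where "\<psi>' t = indicator {a..b} t *\<^sub>R \<psi> t" for t
  define v' where "v' s = indicator {a..b} s *\<^sub>R v s" for s
  define F where "F s t = indicator S (s,t) *\<^sub>R (\<psi>' t *\<^sub>R v' s)" for s t
  have v'm[measurable]: "v' \<in> borel_measurable lebesgue"
    using v unfolding set_integrable_def v'_def by (rule borel_measurable_integrable)
  have v'i: "integrable lebesgue v'"
    using v unfolding set_integrable_def v'_def .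
  have \<psi>b: "\<psi>' \<in> borel_measurable borel"
    unfolding \<psi>'_def by (intro borel_measurable_continuous_on_indicator \<psi>) auto
  have \<psi>'m[measurable]: "\<psi>' \<in> borel_measurable lebesgue"
  proof -
    have "\<psi>' \<in> lborel \<rightarrow>\<^sub>M borel" using \<psi>b by (simp only: measurable_lborel2)
    then show ?thesis by (rule measurable_completion)
  qed
  have \<psi>ai: "\<psi> absolutely_integrable_on {a..b}"
    by (rule absolutely_integrable_continuous_real[OF \<psi>])
  have \<psi>'i: "integrable lebesgue \<psi>'"
    using \<psi>ai unfolding set_integrable_def \<psi>'_def .
  have Fm: "(\<lambda>p. F (fst p) (snd p)) \<in> borel_measurable ((lebesgue :: real measure) \<Otimes>\<^sub>M (lebesgue :: real measure))"
  proof -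
    have "(\<lambda>p. F (fst p) (snd p)) = (\<lambda>p. indicator S p *\<^sub>R (\<psi>' (snd p) *\<^sub>R v' (fst p)))"
      unfolding F_def by simp
    then show ?thesis using meas_test[OF v'm \<psi>b, of a b] unfolding S_def by simp
  qed
  define G where "G s t = \<bar>\<psi>' t\<bar> * norm (v' s)" for s t
  have Gm: "(\<lambda>p. G (fst p) (snd p)) \<in> borel_measurable ((lebesgue :: real measure) \<Otimes>\<^sub>M (lebesgue :: real measure))"
    unfolding G_def by measurable
  have Gi: "integrable ((lebesgue :: real measure) \<Otimes>\<^sub>M (lebesgue :: real measure)) (\<lambda>p. G (fst p) (snd p))"
  proof (rule leb_pair.Fubini_integrable)
    show "integrable lebesgue (\<lambda>x. LINT y|lebesgue. norm (G (fst (x, y)) (snd (x, y))))"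
      unfolding G_def using \<psi>'i v'i by (simp add: abs_mult)
    show "AE x in lebesgue. integrable lebesgue (\<lambda>y. G (fst (x, y)) (snd (x, y)))"
      unfolding G_def using \<psi>'i by simp
  qed (use Gm in simp)
  have Fi: "integrable ((lebesgue :: real measure) \<Otimes>\<^sub>M (lebesgue :: real measure)) (case_prod F)"
  proof (rule Bochner_Integration.integrable_bound[OF Gi])
    show "case_prod F \<in> borel_measurable ((lebesgue :: real measure) \<Otimes>\<^sub>M (lebesgue :: real measure))"
      using Fm by (simp add: case_prod_beta')
    show "AE x in lebesgue \<Otimes>\<^sub>M lebesgue. norm (case_prod F x) \<le> norm (G (fst x) (snd x))"
    proof (rule AE_I2)
      fix p :: "real \<times> real"
      obtain s t where p: "p = (s,t)" by (cases p)
      have "norm (F s t) = indicator S (s,t) * (\<bar>\<psi>' t\<bar> * norm (v' s))" by (simp add: F_def abs_mult)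
      also have "\<dots> \<le> \<bar>\<psi>' t\<bar> * norm (v' s)" by (simp add: indicator_def)
      finally show "norm (case_prod F p) \<le> norm (G (fst p) (snd p))" using p by (simp add: G_def)
    qed
  qed
  have fub: "(LINT t|lebesgue. LINT s|lebesgue. F s t) = (LINT s|lebesgue. LINT t|lebesgue. F s t)"
    by (rule leb_pair.Fubini_integral[OF Fi])
  have inner1: "(LINT t|lebesgue. F s t) = indicator {a..b} s *\<^sub>R (integral {s..b} \<psi> *\<^sub>R v s)" for s
  proof (cases "s \<in> {a..b}")
    case True
    have \<psi>s: "\<psi> absolutely_integrable_on {s..b}"
      using absolutely_integrable_on_subinterval[OF \<psi>ai, of s b] True by auto
    have "(\<lambda>t. F s t) = (\<lambda>t. (indicator {s..b} t *\<^sub>R \<psi> t) *\<^sub>R v s)"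
      using True by (auto simp: F_def S_def \<psi>'_def v'_def indicator_def)
    then have "(LINT t|lebesgue. F s t) = (LINT t|lebesgue. indicator {s..b} t *\<^sub>R \<psi> t) *\<^sub>R v s"
      using \<psi>s unfolding set_integrable_def by (simp only: integral_scaleR_left)
    also have "(LINT t|lebesgue. indicator {s..b} t *\<^sub>R \<psi> t) = integral {s..b} \<psi>"
      using \<psi>s set_lebesgue_integral_eq_integral(2) unfolding set_lebesgue_integral_def by metis
    finally show ?thesis using True by simp
  next
    case False
    then have "F s t = 0" for t by (auto simp: F_def S_def indicator_def)
    then show ?thesis using False by simp
  qed
  have inner2: "(LINT s|lebesgue. F s t) = indicator {a..b} t *\<^sub>R (\<psi> t *\<^sub>R integral {a..t} v)" for t
  proof (cases "t \<in> {a..b}")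
    case True
    have "(\<lambda>s. F s t) = (\<lambda>s. \<psi> t *\<^sub>R (indicator {a..t} s *\<^sub>R v s))"
      using True by (auto simp: F_def S_def \<psi>'_def v'_def indicator_def)
    then have "(LINT s|lebesgue. F s t) = \<psi> t *\<^sub>R (LINT s|lebesgue. indicator {a..t} s *\<^sub>R v s)"
      by (simp only: integral_scaleR_right)
    also have "(LINT s|lebesgue. indicator {a..t} s *\<^sub>R v s) = integral {a..t} v"
    proof -
      have "v absolutely_integrable_on {a..t}"
        using absolutely_integrable_on_subinterval[OF v, of a t] True by auto
      then show ?thesis
        using set_lebesgue_integral_eq_integral(2) unfolding set_lebesgue_integral_def by metis
    qed
    finally show ?thesis using True by simp
  next
    case False
    then have "F s t = 0" for s by (auto simp: F_def S_def indicator_def)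
    then show ?thesis using False by simp
  qed
  have L1: "(LINT s|lebesgue. LINT t|lebesgue. F s t) = integral {a..b} (\<lambda>s. integral {s..b} \<psi> *\<^sub>R v s)"
  proof -
    have c: "continuous_on {a..b} (\<lambda>s. integral {s..b} \<psi>)"
      by (intro indefinite_integral_continuous_1' integrable_continuous_real \<psi>)
    have ai: "(\<lambda>s. integral {s..b} \<psi> *\<^sub>R v s) absolutely_integrable_on {a..b}"
      by (rule abs_int_cont_scaleR[OF c v])
    show ?thesis
      unfolding inner1 using set_lebesgue_integral_eq_integral(2)[OF ai] unfolding set_lebesgue_integral_def .
  qed
  have L2: "(LINT t|lebesgue. LINT s|lebesgue. F s t) = integral {a..b} (\<lambda>t. \<psi> t *\<^sub>R integral {a..t} v)"
  proof -
    have c: "continuous_on {a..b} (\<lambda>t. integral {a..t} v)"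
      by (intro indefinite_integral_continuous_1 set_lebesgue_integral_eq_integral(1) v)
    have ai: "(\<lambda>t. \<psi> t *\<^sub>R integral {a..t} v) absolutely_integrable_on {a..b}"
      by (intro absolutely_integrable_continuous_real continuous_on_scaleR \<psi> c)
    show ?thesis
      unfolding inner2 using set_lebesgue_integral_eq_integral(2)[OF ai] unfolding set_lebesgue_integral_def .
  qed
  show ?thesis using fub L1 L2 by simp
qed



lemma voc:
  fixes f :: "real \<Rightarrow> real" and v x :: "real \<Rightarrow> 'a::euclidean_space"
  assumes T: "0 \<le> T" and fc: "continuous_on {0..T} f"
    and v: "v absolutely_integrable_on {0..T}" and xc: "continuous_on {0..T} x"
    and xe: "\<And>t. t \<in> {0..T} \<Longrightarrow> (\<lambda>s. f s *\<^sub>R x s + v s) integrable_on {0..t} \<and>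
                x t = x0 + integral {0..t} (\<lambda>s. f s *\<^sub>R x s + v s)"
  shows "exp (- fbar f 0 T) *\<^sub>R x T = x0 + integral {0..T} (\<lambda>s. exp (- fbar f 0 s) *\<^sub>R v s)"
proof -
  define F where "F t = fbar f 0 t" for t
  define \<phi> where "\<phi> t = exp (- F t)" for t
  define V where "V t = integral {0..t} v" for t
  define z where "z t = x0 + integral {0..t} (\<lambda>s. f s *\<^sub>R x s)" for t
  define \<psi> where "\<psi> t = f t * \<phi> t" for t
  have fxc: "continuous_on {0..T} (\<lambda>s. f s *\<^sub>R x s)" by (intro continuous_on_scaleR fc xc)
  have Fd: "(F has_real_derivative f t) (at t within {0..T})" if "t \<in> {0..T}" for t
    unfolding F_def fbar_def by (rule integral_has_real_derivative[OF fc that])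
  have \<phi>d: "(\<phi> has_real_derivative (- \<psi> t)) (at t within {0..T})" if "t \<in> {0..T}" for t
  proof -
    have "((\<lambda>t. exp (- F t)) has_real_derivative exp (- F t) * (- f t)) (at t within {0..T})"
      by (intro DERIV_chain2[OF DERIV_exp] derivative_intros Fd[OF that])
    then show ?thesis unfolding \<phi>_def \<psi>_def by (simp add: mult.commute)
  qed
  have Fc: "continuous_on {0..T} F"
    unfolding F_def fbar_def by (intro indefinite_integral_continuous_1 integrable_continuous_real fc)
  have \<phi>c: "continuous_on {0..T} \<phi>"
    unfolding \<phi>_def by (intro continuous_intros Fc)
  have \<psi>c: "continuous_on {0..T} \<psi>"
    unfolding \<psi>_def by (intro continuous_intros fc \<phi>c)
  have zd: "(z has_vector_derivative f t *\<^sub>R x t) (at t within {0..T})" if "t \<in> {0..T}" for t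
  proof -
    have "((\<lambda>u. x0 + integral {0..u} (\<lambda>s. f s *\<^sub>R x s)) has_vector_derivative 0 + f t *\<^sub>R x t) (at t within {0..T})"
      by (intro has_vector_derivative_add has_vector_derivative_const integral_has_vector_derivative[OF fxc that])
    then show ?thesis unfolding z_def by simp
  qed
  have vint: "v integrable_on {0..t}" if "t \<in> {0..T}" for t
  proof -
    have "v absolutely_integrable_on {0..t}"
      using absolutely_integrable_on_subinterval[OF v, of 0 t] that by auto
    then show ?thesis by (rule set_lebesgue_integral_eq_integral(1))
  qed
  have xzV: "x t = z t + V t" if "t \<in> {0..T}" for t
  proof -
    have "(\<lambda>s. f s *\<^sub>R x s) integrable_on {0..t}"
      using that by (intro integrable_continuous_real continuous_on_subset[OF fxc]) auto
    then show ?thesis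
      using xe[OF that] vint[OF that] unfolding z_def V_def by (simp add: integral_add)
  qed
  have Pd: "((\<lambda>t. \<phi> t *\<^sub>R z t) has_vector_derivative (\<psi> t *\<^sub>R V t)) (at t within {0..T})"
    if "t \<in> {0..T}" for t
  proof -
    have "((\<lambda>t. \<phi> t *\<^sub>R z t) has_vector_derivative (\<phi> t *\<^sub>R (f t *\<^sub>R x t) + (- \<psi> t) *\<^sub>R z t)) (at t within {0..T})"
      by (rule has_vector_derivative_scaleR[OF \<phi>d[OF that] zd[OF that]])
    moreover have "\<phi> t *\<^sub>R (f t *\<^sub>R x t) + (- \<psi> t) *\<^sub>R z t = \<psi> t *\<^sub>R V t"
      using xzV[OF that] unfolding \<psi>_def by (simp add: algebra_simps)
    ultimately show ?thesis by simp
  qed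
  have F0: "F 0 = 0" unfolding F_def fbar_def by simp
  have z0: "z 0 = x0" unfolding z_def by simp
  have I1: "integral {0..T} (\<lambda>t. \<psi> t *\<^sub>R V t) = \<phi> T *\<^sub>R z T - x0"
  proof -
    have "((\<lambda>t. \<psi> t *\<^sub>R V t) has_integral (\<phi> T *\<^sub>R z T - \<phi> 0 *\<^sub>R z 0)) {0..T}"
      by (rule fundamental_theorem_of_calculus[OF T Pd])
    then show ?thesis using F0 z0 unfolding \<phi>_def by (simp add: integral_unique)
  qed
  have \<psi>int: "integral {s..T} \<psi> = \<phi> s - \<phi> T" if "s \<in> {0..T}" for s
  proof -
    have "((\<lambda>t. - \<psi> t) has_integral (\<phi> T - \<phi> s)) {s..T}"
    proof (rule fundamental_theorem_of_calculus)
      show "s \<le> T" using that by auto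
      fix t assume t: "t \<in> {s..T}"
      then have "t \<in> {0..T}" using that by auto
      from \<phi>d[OF this] have "(\<phi> has_real_derivative (- \<psi> t)) (at t within {s..T})"
        by (rule has_field_derivative_subset) (use that in auto)
      then show "(\<phi> has_vector_derivative (- \<psi> t)) (at t within {s..T})"
        by (simp add: has_real_derivative_iff_has_vector_derivative)
    qed
    from has_integral_neg[OF this] have "(\<psi> has_integral (\<phi> s - \<phi> T)) {s..T}"
      by simp
    then show ?thesis by (rule integral_unique)
  qed
  have sw: "integral {0..T} (\<lambda>s. integral {s..T} \<psi> *\<^sub>R v s) = integral {0..T} (\<lambda>t. \<psi> t *\<^sub>R V t)"
    unfolding V_def by (rule swap_lemma[OF v \<psi>c])
  have I2: "integral {0..T} (\<lambda>s. integral {s..T} \<psi> *\<^sub>R v s) = integral {0..T} (\<lambda>s. \<phi> s *\<^sub>R v s - \<phi> T *\<^sub>R v s)"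
    by (rule integral_cong) (simp add: \<psi>int scaleR_left_diff_distrib)
  have pvi: "(\<lambda>s. \<phi> s *\<^sub>R v s) integrable_on {0..T}"
    by (rule set_lebesgue_integral_eq_integral(1)[OF abs_int_cont_scaleR[OF \<phi>c v]])
  have vi: "v integrable_on {0..T}" using vint T by auto
  have I3: "integral {0..T} (\<lambda>s. \<phi> s *\<^sub>R v s - \<phi> T *\<^sub>R v s) = integral {0..T} (\<lambda>s. \<phi> s *\<^sub>R v s) - \<phi> T *\<^sub>R V T"
    unfolding V_def using pvi integrable_cmul[OF vi, of "\<phi> T"] by (simp add: integral_diff)
  have "\<phi> T *\<^sub>R x T = \<phi> T *\<^sub>R z T + \<phi> T *\<^sub>R V T"
    using xzV[of T] T by (simp add: scaleR_add_right)
  also have "\<dots> = x0 + integral {0..T} (\<lambda>s. \<phi> s *\<^sub>R v s)"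
  proof -
    have "integral {0..T} (\<lambda>t. \<psi> t *\<^sub>R V t) = integral {0..T} (\<lambda>s. \<phi> s *\<^sub>R v s) - \<phi> T *\<^sub>R V T"
      using sw I2 I3 by simp
    then have "\<phi> T *\<^sub>R z T - x0 = integral {0..T} (\<lambda>s. \<phi> s *\<^sub>R v s) - \<phi> T *\<^sub>R V T"
      using I1 by simp
    then show ?thesis by (simp add: algebra_simps)
  qed
  finally show ?thesis unfolding \<phi>_def F_def .
qed



lemma le_one_plus_sq: "(y::real) \<le> 1 + y\<^sup>2"
proof -
  have "0 \<le> (y - 1/2)\<^sup>2" by simp
  then have "0 \<le> y*y - y + 1/4" by (simp add: power2_eq_square algebra_simps)
  then show ?thesis by (simp add: power2_eq_square)
qed

lemma adm_abs_int:
  fixes u :: "real \<Rightarrow> 'a::euclidean_space"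
  assumes "u integrable_on {0..T}" "(\<lambda>t. (norm (u t))\<^sup>2) integrable_on {0..T}"
  shows "u absolutely_integrable_on {0..T}"
proof (rule measurable_bounded_by_integrable_imp_absolutely_integrable)
  show "u \<in> borel_measurable (lebesgue_on {0..T})"
    by (rule integrable_imp_measurable[OF assms(1)])
  show "{0..T} \<in> sets lebesgue" by simp
  show "(\<lambda>t. 1 + (norm (u t))\<^sup>2) integrable_on {0..T}"
    by (intro integrable_add integrable_const_ivl assms(2))
  show "norm (u x) \<le> 1 + (norm (u x))\<^sup>2" for x by (rule le_one_plus_sq)
qed

lemma adm_terminal:
  fixes f h g :: "real \<Rightarrow> real" and m x0 :: "'a::euclidean_space" and u x :: "real \<Rightarrow> 'a"
  assumes T: "0 \<le> T" and fc: "continuous_on {0..T} f" and hc: "continuous_on {0..T} h"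
    and gc: "continuous_on {0..T} g" and adm: "admissible f h g m x0 T u x"
  shows "u absolutely_integrable_on {0..T}"
    and "x T = exp (fbar f 0 T) *\<^sub>R (x0 + hbar f h 0 T *\<^sub>R m)
              + integral {0..T} (\<lambda>s. (g s * exp (fbar f 0 T - fbar f 0 s)) *\<^sub>R u s)"
proof -
  define F where "F t = fbar f 0 t" for t
  have ui: "u integrable_on {0..T}" and u2: "(\<lambda>t. (norm (u t))\<^sup>2) integrable_on {0..T}"
    and xc: "continuous_on {0..T} x"
    and xe0: "\<And>t. t \<in> {0..T} \<Longrightarrow> (\<lambda>s. f s *\<^sub>R x s + h s *\<^sub>R m + g s *\<^sub>R u s) integrable_on {0..t} \<and>
        x t = x0 + integral {0..t} (\<lambda>s. f s *\<^sub>R x s + h s *\<^sub>R m + g s *\<^sub>R u s)"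
    using adm unfolding admissible_def by auto
  show ua: "u absolutely_integrable_on {0..T}" by (rule adm_abs_int[OF ui u2])
  define v where "v s = h s *\<^sub>R m + g s *\<^sub>R u s" for s
  have hm: "(\<lambda>s. h s *\<^sub>R m) absolutely_integrable_on {0..T}"
    by (intro absolutely_integrable_continuous_real continuous_intros hc)
  have gu: "(\<lambda>s. g s *\<^sub>R u s) absolutely_integrable_on {0..T}"
    by (rule abs_int_cont_scaleR[OF gc ua])
  have va: "v absolutely_integrable_on {0..T}"
    using hm gu unfolding v_def set_integrable_def scaleR_add_right by (rule Bochner_Integration.integrable_add)
  have xe: "(\<lambda>s. f s *\<^sub>R x s + v s) integrable_on {0..t} \<and> x t = x0 + integral {0..t} (\<lambda>s. f s *\<^sub>R x s + v s)"
    if "t \<in> {0..T}" for t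
    using xe0[OF that] unfolding v_def by (simp add: add.assoc)
  have V: "exp (- F T) *\<^sub>R x T = x0 + integral {0..T} (\<lambda>s. exp (- F s) *\<^sub>R v s)"
    unfolding F_def by (rule voc[OF T fc va xc xe])
  have Fc: "continuous_on {0..T} F"
    unfolding F_def fbar_def by (intro indefinite_integral_continuous_1 integrable_continuous_real fc)
  have c1: "continuous_on {0..T} (\<lambda>s. exp (- F s) * h s)" by (intro continuous_intros Fc hc)
  have c2: "continuous_on {0..T} (\<lambda>s. exp (- F s) * g s)" by (intro continuous_intros Fc gc)
  have i1: "((\<lambda>s. (exp (- F s) * h s) *\<^sub>R m) has_integral (hbar f h 0 T *\<^sub>R m)) {0..T}"
    unfolding hbar_def F_def[symmetric]
    by (intro has_integral_scaleR_left integrable_integral integrable_continuous_real c1)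
  have i2: "(\<lambda>s. (exp (- F s) * g s) *\<^sub>R u s) integrable_on {0..T}"
    by (rule set_lebesgue_integral_eq_integral(1)[OF abs_int_cont_scaleR[OF c2 ua]])
  have "integral {0..T} (\<lambda>s. exp (- F s) *\<^sub>R v s)
      = integral {0..T} (\<lambda>s. (exp (- F s) * h s) *\<^sub>R m + (exp (- F s) * g s) *\<^sub>R u s)"
    unfolding v_def by (simp add: scaleR_add_right)
  also have "\<dots> = hbar f h 0 T *\<^sub>R m + integral {0..T} (\<lambda>s. (exp (- F s) * g s) *\<^sub>R u s)"
    using i1 i2 by (simp add: integral_add has_integral_integrable integral_unique)
  finally have I: "integral {0..T} (\<lambda>s. exp (- F s) *\<^sub>R v s) = hbar f h 0 T *\<^sub>R m + integral {0..T} (\<lambda>s. (exp (- F s) * g s) *\<^sub>R u s)" .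
  have K: "exp (F T) *\<^sub>R integral {0..T} (\<lambda>s. (exp (- F s) * g s) *\<^sub>R u s)
      = integral {0..T} (\<lambda>s. (g s * exp (F T - F s)) *\<^sub>R u s)"
  proof -
    have "exp (F T) *\<^sub>R integral {0..T} (\<lambda>s. (exp (- F s) * g s) *\<^sub>R u s)
        = integral {0..T} (\<lambda>s. exp (F T) *\<^sub>R ((exp (- F s) * g s) *\<^sub>R u s))"
      by (rule integral_cmul[symmetric])
    also have "\<dots> = integral {0..T} (\<lambda>s. (g s * exp (F T - F s)) *\<^sub>R u s)"
      by (rule integral_cong) (simp add: exp_diff exp_minus field_simps)
    finally show ?thesis .
  qed
  have "x T = exp (F T) *\<^sub>R (exp (- F T) *\<^sub>R x T)" by (simp add: exp_minus)
  also have "\<dots> = exp (F T) *\<^sub>R (x0 + hbar f h 0 T *\<^sub>R m) + exp (F T) *\<^sub>R integral {0..T} (\<lambda>s. (exp (- F s) * g s) *\<^sub>R u s)"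
    unfolding V I by (simp add: scaleR_add_right)
  also have "\<dots> = exp (F T) *\<^sub>R (x0 + hbar f h 0 T *\<^sub>R m) + integral {0..T} (\<lambda>s. (g s * exp (F T - F s)) *\<^sub>R u s)"
    by (simp only: K)
  finally show "x T = exp (fbar f 0 T) *\<^sub>R (x0 + hbar f h 0 T *\<^sub>R m)
              + integral {0..T} (\<lambda>s. (g s * exp (fbar f 0 T - fbar f 0 s)) *\<^sub>R u s)"
    by (simp only: F_def)
qed



lemma sq_ineq:
  fixes p q :: "'a::real_inner"
  shows "(norm q)\<^sup>2 + 2 * (q \<bullet> (p - q)) \<le> (norm p)\<^sup>2"
proof -
  have "0 \<le> (p - q) \<bullet> (p - q)" by simp
  then show ?thesis
    by (simp add: power2_norm_eq_inner inner_diff_left inner_diff_right inner_commute algebra_simps)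
qed

lemma test_X:
  fixes x0 xT m lam w :: "'a::real_vector" and E Gt Ht HT d0 :: real
  assumes "lam = (1 / d0) *\<^sub>R w" "w = xT - E *\<^sub>R x0 - (E * HT) *\<^sub>R m"
  shows "x0 + Ht *\<^sub>R m + (E * Gt) *\<^sub>R lam = (1 - E*E*Gt/d0) *\<^sub>R x0 + (E*Gt/d0) *\<^sub>R xT + (Ht - E*E*HT*Gt/d0) *\<^sub>R m"
  unfolding assms(1) assms(2) by (simp add: algebra_simps scaleR_diff_right)


theorem theorem4p1:
  fixes f h g :: "real \<Rightarrow> real" and m x0 xT :: "real ^ 'd" and T \<gamma> :: real
    and xs us :: "real \<Rightarrow> real ^ 'd"
  assumes "T > 0" and "\<gamma> > 0"
    and "continuous_on {0..T} f" and "continuous_on {0..T} h" and "continuous_on {0..T} g"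
    and xs_def: "\<And>t. xs t = exp (fbar f 0 t) *\<^sub>R
          ((dgam f g T \<gamma> t / dgam f g T \<gamma> 0) *\<^sub>R x0
           + (exp (fbar f 0 T) * gbar2 f g 0 t / dgam f g T \<gamma> 0) *\<^sub>R xT
           + (hbar f h 0 t - exp (2 * fbar f 0 T) * hbar f h 0 T * gbar2 f g 0 t / dgam f g T \<gamma> 0) *\<^sub>R m)"
    and us_def: "\<And>t. us t = (g t * exp (fbar f t T) / dgam f g T \<gamma> t) *\<^sub>R
          (xT - exp (fbar f t T) *\<^sub>R xs t - (exp (fbar f 0 T) * hbar f h t T) *\<^sub>R m)"
  shows "admissible f h g m x0 T us xs \<and>
         (\<forall>u x. admissible f h g m x0 T u x \<longrightarrow> cost \<gamma> xT T us xs \<le> cost \<gamma> xT T u x)"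
proof -
  note fc = assms(3) and hc = assms(4) and gc = assms(5)
  have T0: "0 \<le> T" using assms(1) by simp
  define F where "F t = fbar f 0 t" for t
  define H where "H t = hbar f h 0 t" for t
  define G where "G t = gbar2 f g 0 t" for t
  define E where "E = exp (F T)"
  define d where "d t = dgam f g T \<gamma> t" for t
  define w where "w = xT - E *\<^sub>R x0 - (E * H T) *\<^sub>R m"
  define lam where "lam = (1 / d 0) *\<^sub>R w"
  have Fc: "continuous_on {0..T} F"
    unfolding F_def fbar_def by (intro indefinite_integral_continuous_1 integrable_continuous_real fc)
  have hF: "continuous_on {0..T} (\<lambda>z. exp (- fbar f 0 z) * h z)"
    using Fc unfolding F_def by (intro continuous_intros hc)
  have gF: "continuous_on {0..T} (\<lambda>z. exp (- 2 * fbar f 0 z) * (g z)\<^sup>2)"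
    using Fc unfolding F_def by (intro continuous_intros gc)
  have Hc: "continuous_on {0..T} H"
    unfolding H_def hbar_def by (intro indefinite_integral_continuous_1 integrable_continuous_real hF)
  have Gc: "continuous_on {0..T} G"
    unfolding G_def gbar2_def by (intro indefinite_integral_continuous_1 integrable_continuous_real gF)
  have Fsplit: "fbar f t T = F T - F t" if "t \<in> {0..T}" for t
    using Henstock_Kurzweil_Integration.integral_combine[where a=0 and c=t and b=T and f=f] integrable_continuous_real[OF fc] that unfolding F_def fbar_def by auto
  have Hsplit: "hbar f h t T = H T - H t" if "t \<in> {0..T}" for t
    using Henstock_Kurzweil_Integration.integral_combine[where a=0 and c=t and b=T, OF _ _ integrable_continuous_real[OF hF]] that unfolding H_def hbar_def by auto
  have Gsplit: "gbar2 f g t T = G T - G t" if "t \<in> {0..T}" for t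
    using Henstock_Kurzweil_Integration.integral_combine[where a=0 and c=t and b=T, OF _ _ integrable_continuous_real[OF gF]] that unfolding G_def gbar2_def by auto
  have Gnn: "0 \<le> gbar2 f g t T" if "t \<in> {0..T}" for t
    unfolding gbar2_def
  proof (rule integral_nonneg)
    have "continuous_on {t..T} (\<lambda>z. exp (- 2 * fbar f 0 z) * (g z)\<^sup>2)"
      by (rule continuous_on_subset[OF gF]) (use that in auto)
    then show "(\<lambda>z. exp (- 2 * fbar f 0 z) * (g z)\<^sup>2) integrable_on {t..T}"
      by (rule integrable_continuous_real)
  qed simp
  have F0: "F 0 = 0" and H0: "H 0 = 0" and G0: "G 0 = 0"
    unfolding F_def H_def G_def fbar_def hbar_def gbar2_def by simp_all
  have GT: "gbar2 f g T T = 0" unfolding gbar2_def by simp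
  have E2: "exp (2 * F T) = E * E" unfolding E_def by (simp add: exp_add[symmetric])
  have dpos: "d t > 0" if "t \<in> {0..T}" for t
  proof -
    have "0 \<le> exp (2 * fbar f 0 T) * gbar2 f g t T" using Gnn[OF that] by simp
    moreover have "0 < inverse \<gamma>" using assms(2) by simp
    ultimately show ?thesis unfolding d_def dgam_def by (rule add_pos_nonneg[rotated])
  qed
  have d0: "d 0 > 0" using dpos T0 by simp
  have dform: "d t = d 0 - E * E * G t" if "t \<in> {0..T}" for t
  proof -
    have "d t = inverse \<gamma> + exp (2 * F T) * gbar2 f g t T" unfolding d_def dgam_def F_def ..
    also have "\<dots> = inverse \<gamma> + E * E * (G T - G t)" using Gsplit[OF that] E2 by simp
    finally have 1: "d t = inverse \<gamma> + E * E * (G T - G t)" .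
    have "d 0 = inverse \<gamma> + exp (2 * F T) * gbar2 f g 0 T" unfolding d_def dgam_def F_def ..
    also have "\<dots> = inverse \<gamma> + E * E * G T" using E2 by (simp add: G_def)
    finally have 2: "d 0 = inverse \<gamma> + E * E * G T" .
    show ?thesis unfolding 1 2 by (simp add: algebra_simps)
  qed
  have dT: "d T = inverse \<gamma>" unfolding d_def dgam_def using GT by simp
  have X: "xs t = exp (F t) *\<^sub>R (x0 + H t *\<^sub>R m + (E * G t) *\<^sub>R lam)" if "t \<in> {0..T}" for t
  proof -
    have "xs t = exp (F t) *\<^sub>R ((d t / d 0) *\<^sub>R x0 + (E * G t / d 0) *\<^sub>R xT + (H t - E * E * H T * G t / d 0) *\<^sub>R m)"
      unfolding xs_def F_def[symmetric] H_def[symmetric] G_def[symmetric] d_def[symmetric] E_def[symmetric] E2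
      by (simp add: algebra_simps)
    also have "d t / d 0 = 1 - E * E * G t / d 0"
      using dform[OF that] d0 by (simp add: field_simps)
    also have "(1 - E*E*G t/d 0) *\<^sub>R x0 + (E*G t/d 0) *\<^sub>R xT + (H t - E*E*H T*G t/d 0) *\<^sub>R m
        = x0 + H t *\<^sub>R m + (E * G t) *\<^sub>R lam"
      by (rule test_X[OF lam_def w_def, symmetric])
    finally show ?thesis .
  qed
  have U: "us t = (g t * exp (F T - F t)) *\<^sub>R lam" if "t \<in> {0..T}" for t
  proof -
    have e: "exp (F T - F t) * exp (F t) = E" unfolding E_def by (simp add: exp_diff)
    have wl: "w = d 0 *\<^sub>R lam" unfolding lam_def using d0 by simp
    have "xT - exp (F T - F t) *\<^sub>R xs t - (E * (H T - H t)) *\<^sub>R m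
        = xT - E *\<^sub>R (x0 + H t *\<^sub>R m + (E * G t) *\<^sub>R lam) - (E * (H T - H t)) *\<^sub>R m"
      by (simp only: X[OF that] scaleR_scaleR e)
    also have "\<dots> = w - (E * E * G t) *\<^sub>R lam"
      unfolding w_def by (simp add: algebra_simps scaleR_diff_right)
    also have "\<dots> = d t *\<^sub>R lam"
      unfolding wl dform[OF that] by (simp add: scaleR_diff_left)
    finally have inner: "xT - exp (F T - F t) *\<^sub>R xs t - (E * (H T - H t)) *\<^sub>R m = d t *\<^sub>R lam" .
    have "us t = (g t * exp (F T - F t) / d t) *\<^sub>R (xT - exp (F T - F t) *\<^sub>R xs t - (E * (H T - H t)) *\<^sub>R m)"
      unfolding us_def Fsplit[OF that] Hsplit[OF that] d_def E_def F_def ..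
    also have "\<dots> = (g t * exp (F T - F t)) *\<^sub>R lam"
      unfolding inner using dpos[OF that] by simp
    finally show ?thesis .
  qed
  have Fd: "(F has_real_derivative f t) (at t within {0..T})" if "t \<in> {0..T}" for t
    unfolding F_def fbar_def by (rule integral_has_real_derivative[OF fc that])
  have Hd: "(H has_real_derivative (exp (- F t) * h t)) (at t within {0..T})" if "t \<in> {0..T}" for t
    unfolding H_def hbar_def F_def by (rule integral_has_real_derivative[OF hF that])
  have Gd: "(G has_real_derivative (exp (- 2 * F t) * (g t)\<^sup>2)) (at t within {0..T})" if "t \<in> {0..T}" for t
    unfolding G_def gbar2_def F_def by (rule integral_has_real_derivative[OF gF that])
  define Xi where "Xi t = x0 + H t *\<^sub>R m + (E * G t) *\<^sub>R lam" for t
  define Xf where "Xf t = exp (F t) *\<^sub>R Xi t" for t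
  have Xid: "(Xi has_vector_derivative ((exp (- F t) * h t) *\<^sub>R m + (E * (exp (- 2 * F t) * (g t)\<^sup>2)) *\<^sub>R lam)) (at t within {0..T})"
    if "t \<in> {0..T}" for t
  proof -
    have 1: "((\<lambda>t. H t *\<^sub>R m) has_vector_derivative (exp (- F t) * h t) *\<^sub>R m) (at t within {0..T})"
      using has_vector_derivative_scaleR[OF Hd[OF that] has_vector_derivative_const[of m]] by simp
    have 2: "((\<lambda>t. (E * G t) *\<^sub>R lam) has_vector_derivative (E * (exp (- 2 * F t) * (g t)\<^sup>2)) *\<^sub>R lam) (at t within {0..T})"
      using has_vector_derivative_scaleR[OF DERIV_cmult[OF Gd[OF that], of E] has_vector_derivative_const[of lam]] by simp
    show ?thesis
      unfolding Xi_def using has_vector_derivative_add[OF has_vector_derivative_add[OF has_vector_derivative_const 1] 2] by simp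
  qed
  have expFd: "((\<lambda>t. exp (F t)) has_real_derivative exp (F t) * f t) (at t within {0..T})" if "t \<in> {0..T}" for t
    by (rule DERIV_chain2[OF DERIV_exp Fd[OF that]])
  have Xd: "(Xf has_vector_derivative (f t *\<^sub>R xs t + h t *\<^sub>R m + g t *\<^sub>R us t)) (at t within {0..T})"
    if "t \<in> {0..T}" for t
  proof -
    have D: "(Xf has_vector_derivative (exp (F t) *\<^sub>R ((exp (- F t) * h t) *\<^sub>R m + (E * (exp (- 2 * F t) * (g t)\<^sup>2)) *\<^sub>R lam) + (exp (F t) * f t) *\<^sub>R Xi t)) (at t within {0..T})"
      unfolding Xf_def[abs_def] by (rule has_vector_derivative_scaleR[OF expFd[OF that] Xid[OF that]])
    have a: "exp (F t) * (exp (- F t) * h t) = h t" by (simp add: exp_minus)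
    have e1: "exp (F T - F t) = E / exp (F t)" unfolding E_def by (simp add: exp_diff)
    have e2: "exp (- 2 * F t) = 1 / (exp (F t) * exp (F t))"
      by (simp add: exp_minus exp_add[symmetric] inverse_eq_divide)
    have b: "exp (F t) * (E * (exp (- 2 * F t) * (g t)\<^sup>2)) = g t * (g t * exp (F T - F t))"
      unfolding e1 e2 by (simp add: field_simps power2_eq_square)
    have "exp (F t) *\<^sub>R ((exp (- F t) * h t) *\<^sub>R m + (E * (exp (- 2 * F t) * (g t)\<^sup>2)) *\<^sub>R lam) + (exp (F t) * f t) *\<^sub>R Xi t
        = h t *\<^sub>R m + (g t * (g t * exp (F T - F t))) *\<^sub>R lam + (exp (F t) * f t) *\<^sub>R Xi t"
      by (simp only: scaleR_add_right scaleR_scaleR a b)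
    also have "\<dots> = f t *\<^sub>R xs t + h t *\<^sub>R m + g t *\<^sub>R us t"
      using X[OF that] U[OF that] unfolding Xi_def[symmetric] by (simp add: algebra_simps)
    finally show ?thesis using D by simp
  qed
  have FT: "((\<lambda>s. f s *\<^sub>R xs s + h s *\<^sub>R m + g s *\<^sub>R us s) has_integral (xs t - x0)) {0..t}"
    if "t \<in> {0..T}" for t
  proof -
    have "((\<lambda>s. f s *\<^sub>R xs s + h s *\<^sub>R m + g s *\<^sub>R us s) has_integral (Xf t - Xf 0)) {0..t}"
    proof (rule fundamental_theorem_of_calculus)
      show "0 \<le> t" using that by auto
      fix s assume s: "s \<in> {0..t}"
      then have "s \<in> {0..T}" using that by auto
      from Xd[OF this] show "(Xf has_vector_derivative (f s *\<^sub>R xs s + h s *\<^sub>R m + g s *\<^sub>R us s)) (at s within {0..t})"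
        by (rule has_vector_derivative_within_subset) (use that in auto)
    qed
    moreover have "Xf t = xs t" using X[OF that] unfolding Xf_def Xi_def by simp
    moreover have "Xf 0 = x0" unfolding Xf_def Xi_def using F0 H0 G0 by simp
    ultimately show ?thesis by simp
  qed
  have usc: "continuous_on {0..T} us"
  proof (rule continuous_on_eq)
    show "continuous_on {0..T} (\<lambda>t. (g t * exp (F T - F t)) *\<^sub>R lam)" by (intro continuous_intros gc Fc)
    show "(g t * exp (F T - F t)) *\<^sub>R lam = us t" if "t \<in> {0..T}" for t using U[OF that] by simp
  qed
  have xsc: "continuous_on {0..T} xs"
  proof (rule continuous_on_eq)
    show "continuous_on {0..T} (\<lambda>t. exp (F t) *\<^sub>R (x0 + H t *\<^sub>R m + (E * G t) *\<^sub>R lam))"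
      by (intro continuous_intros Fc Hc Gc)
    show "exp (F t) *\<^sub>R (x0 + H t *\<^sub>R m + (E * G t) *\<^sub>R lam) = xs t" if "t \<in> {0..T}" for t
      using X[OF that] by simp
  qed
  have adm_s: "admissible f h g m x0 T us xs"
    unfolding admissible_def
  proof (intro conjI ballI)
    show "us integrable_on {0..T}" by (rule integrable_continuous_real[OF usc])
    show "(\<lambda>t. (norm (us t))\<^sup>2) integrable_on {0..T}"
      by (intro integrable_continuous_real continuous_intros usc)
    show "continuous_on {0..T} xs" by (rule xsc)
    show "xs 0 = x0" using X[of 0] T0 F0 H0 G0 by simp
    fix t assume t: "t \<in> {0..T}"
    show "(\<lambda>s. f s *\<^sub>R xs s + h s *\<^sub>R m + g s *\<^sub>R us s) integrable_on {0..t}"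
      using FT[OF t] by (rule has_integral_integrable)
    show "xs t = x0 + integral {0..t} (\<lambda>s. f s *\<^sub>R xs s + h s *\<^sub>R m + g s *\<^sub>R us s)"
      using integral_unique[OF FT[OF t]] by simp
  qed
  have opt: "cost \<gamma> xT T us xs \<le> cost \<gamma> xT T u x" if adm: "admissible f h g m x0 T u x" for u x
  proof -
    define k where "k s = g s * exp (F T - F s)" for s
    have kc: "continuous_on {0..T} k" unfolding k_def by (intro continuous_intros gc Fc)
    have ua: "u absolutely_integrable_on {0..T}" by (rule adm_terminal(1)[OF T0 fc hc gc adm])
    have usa: "us absolutely_integrable_on {0..T}" by (rule adm_terminal(1)[OF T0 fc hc gc adm_s])
    have xTu: "x T = exp (F T) *\<^sub>R (x0 + H T *\<^sub>R m) + integral {0..T} (\<lambda>s. k s *\<^sub>R u s)"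
      using adm_terminal(2)[OF T0 fc hc gc adm] unfolding k_def F_def H_def .
    have xTs: "xs T = exp (F T) *\<^sub>R (x0 + H T *\<^sub>R m) + integral {0..T} (\<lambda>s. k s *\<^sub>R us s)"
      using adm_terminal(2)[OF T0 fc hc gc adm_s] unfolding k_def F_def H_def .
    define Ju where "Ju = integral {0..T} (\<lambda>s. k s *\<^sub>R u s)"
    define Js where "Js = integral {0..T} (\<lambda>s. k s *\<^sub>R us s)"
    have kui: "(\<lambda>s. k s *\<^sub>R u s) integrable_on {0..T}"
      by (rule set_lebesgue_integral_eq_integral(1)[OF abs_int_cont_scaleR[OF kc ua]])
    have kusi: "(\<lambda>s. k s *\<^sub>R us s) integrable_on {0..T}"
      by (rule set_lebesgue_integral_eq_integral(1)[OF abs_int_cont_scaleR[OF kc usa]])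
    have diffx: "x T - xs T = Ju - Js" using xTu xTs unfolding Ju_def Js_def by simp
    have qT: "xs T - xT = - (inverse \<gamma> *\<^sub>R lam)"
    proof -
      have "xs T = E *\<^sub>R (x0 + H T *\<^sub>R m + (E * G T) *\<^sub>R lam)" using X[of T] T0 unfolding E_def by simp
      then have "xT - xs T = w - (E * E * G T) *\<^sub>R lam" unfolding w_def by (simp add: algebra_simps)
      also have "w = d 0 *\<^sub>R lam" unfolding lam_def using d0 by simp
      also have "d 0 *\<^sub>R lam - (E * E * G T) *\<^sub>R lam = d T *\<^sub>R lam"
        using dform[of T] T0 by (simp add: scaleR_diff_left)
      finally have "xT - xs T = inverse \<gamma> *\<^sub>R lam" using dT by simp
      then show ?thesis by (simp add: algebra_simps)
    qed
    have pw: "(norm (us t))\<^sup>2 / 2 + (lam \<bullet> (k t *\<^sub>R u t) - lam \<bullet> (k t *\<^sub>R us t)) \<le> (norm (u t))\<^sup>2 / 2"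
      if "t \<in> {0..T}" for t
    proof -
      have "us t \<bullet> (u t - us t) = lam \<bullet> (k t *\<^sub>R u t) - lam \<bullet> (k t *\<^sub>R us t)"
        using U[OF that] unfolding k_def by (simp add: inner_diff_right inner_commute)
      with sq_ineq[of "us t" "u t"] show ?thesis by simp
    qed
    have u2: "(\<lambda>t. (norm (u t))\<^sup>2) integrable_on {0..T}" using adm unfolding admissible_def by auto
    have i1: "(\<lambda>t. (norm (u t))\<^sup>2 / 2) integrable_on {0..T}"
    proof -
      have "(\<lambda>t. (norm (u t))\<^sup>2 / 2) = (\<lambda>t. (1/2) *\<^sub>R (norm (u t))\<^sup>2)" by (simp add: fun_eq_iff)
      then show ?thesis by (simp only: integrable_cmul[OF u2])
    qed
    have i0: "(\<lambda>t. (norm (us t))\<^sup>2 / 2) integrable_on {0..T}"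
      by (intro integrable_continuous_real continuous_intros usc) auto
    have l1: "(\<lambda>t. lam \<bullet> (k t *\<^sub>R u t)) integrable_on {0..T}"
      using integrable_linear[OF kui bounded_linear_inner_right[of lam]] by (simp add: o_def)
    have l1i: "integral {0..T} (\<lambda>t. lam \<bullet> (k t *\<^sub>R u t)) = lam \<bullet> Ju"
      using integral_linear[OF kui bounded_linear_inner_right[of lam]] unfolding Ju_def by (simp add: o_def)
    have l2: "(\<lambda>t. lam \<bullet> (k t *\<^sub>R us t)) integrable_on {0..T}"
      using integrable_linear[OF kusi bounded_linear_inner_right[of lam]] by (simp add: o_def)
    have l2i: "integral {0..T} (\<lambda>t. lam \<bullet> (k t *\<^sub>R us t)) = lam \<bullet> Js"
      using integral_linear[OF kusi bounded_linear_inner_right[of lam]] unfolding Js_def by (simp add: o_def)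
    have i2: "(\<lambda>t. (norm (us t))\<^sup>2 / 2 + (lam \<bullet> (k t *\<^sub>R u t) - lam \<bullet> (k t *\<^sub>R us t))) integrable_on {0..T}"
      by (intro integrable_add integrable_diff i0 l1 l2)
    have "integral {0..T} (\<lambda>t. (norm (us t))\<^sup>2 / 2 + (lam \<bullet> (k t *\<^sub>R u t) - lam \<bullet> (k t *\<^sub>R us t)))
        \<le> integral {0..T} (\<lambda>t. (norm (u t))\<^sup>2 / 2)"
      by (rule integral_le[OF i2 i1 pw])
    moreover have "integral {0..T} (\<lambda>t. (norm (us t))\<^sup>2 / 2 + (lam \<bullet> (k t *\<^sub>R u t) - lam \<bullet> (k t *\<^sub>R us t)))
        = integral {0..T} (\<lambda>t. (norm (us t))\<^sup>2 / 2) + (lam \<bullet> Ju - lam \<bullet> Js)"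
      using i0 l1 l2 l1i l2i by (simp add: integral_add integral_diff integrable_diff)
    ultimately have A: "integral {0..T} (\<lambda>t. (norm (us t))\<^sup>2 / 2) + (lam \<bullet> Ju - lam \<bullet> Js)
        \<le> integral {0..T} (\<lambda>t. (norm (u t))\<^sup>2 / 2)" by simp
    have B2: "\<gamma> / 2 * (norm (xs T - xT))\<^sup>2 - (lam \<bullet> Ju - lam \<bullet> Js) \<le> \<gamma> / 2 * (norm (x T - xT))\<^sup>2"
    proof -
      have e0: "(x T - xT) - (xs T - xT) = Ju - Js" using diffx by simp
      have e: "(xs T - xT) \<bullet> ((x T - xT) - (xs T - xT)) = - inverse \<gamma> * (lam \<bullet> Ju - lam \<bullet> Js)"
        unfolding e0 unfolding qT by (simp add: inner_diff_right algebra_simps)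
      from sq_ineq[of "xs T - xT" "x T - xT"] e
      have "(norm (xs T - xT))\<^sup>2 - 2 * inverse \<gamma> * (lam \<bullet> Ju - lam \<bullet> Js) \<le> (norm (x T - xT))\<^sup>2" by simp
      then have "\<gamma> / 2 * ((norm (xs T - xT))\<^sup>2 - 2 * inverse \<gamma> * (lam \<bullet> Ju - lam \<bullet> Js)) \<le> \<gamma> / 2 * (norm (x T - xT))\<^sup>2"
        using assms(2) by (intro mult_left_mono) auto
      moreover have c: "\<gamma> / 2 * (2 * inverse \<gamma> * Z) = Z" for Z using assms(2) by simp
      ultimately show ?thesis by (simp only: right_diff_distrib c)
    qed
    show ?thesis unfolding cost_def using A B2 by linarith
  qed
  show ?thesis using adm_s opt by blast
qed


end
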